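(* For all graphs $G$ and $H$: $G$ and $H$ are distinguishable by EB-1WL if and only if they are distinguishable by $\mathrm{CFOC}^3$, i.e. there is a $\mathrm{CFOC}^3$ sentence $\phi$ with $G\models\phi$ and $H\not\models\phi$.
   Context: All graphs are finite, simple and undirected, without isolated vertices; $N(v)$ denotes the neighborhood of $v$. An ordered edge of $G=(V,E)$ is a pair $(u,v)$ with $\{u,v\}\in E$. EB-1WL coloring: $\mathrm{eb}^{(0)}(G,(u,v))=1$ for every ordered edge, and $\mathrm{eb}^{(\ell+1)}(G,(u,v)) = \big(\mathrm{eb}^{(\ell)}(G,(u,v)),\ \{\!\{\mathrm{eb}^{(\ell)}(G,(u,x)) : x\in N(u)\}\!\},\ \{\!\{(\mathrm{eb}^{(\ell)}(G,(u,y)),\mathrm{eb}^{(\ell)}(G,(v,y))) : y\in N(u)\cap N(v)\}\!\},\ \{\!\{\mathrm{eb}^{(\ell)}(G,(v,z)) : z\in N(v)\}\!\}\big)$. $\mathrm{eb}^{(\ell)}(G)$ is the multiset of $\mathrm{eb}^{(\ell)}(G,(u,v))$ over all ordered edges. Graphs are distinguishable by EB-1WL if they have different numbers of vertices or there is $\ell$ with $\mathrm{eb}^{(\ell)}(G)\neq\mathrm{eb}^{(\ell)}(H)$. Logic: first-order logic over the vocabulary with one binary relation $E$, where $E(x,y)$ holds of $(u,v)$ iff $\{u,v\}$ is an edge. For a tuple $\bar x=(x_1,\dots,x_n)$ of distinct variables, $\mathrm{clique}(\bar x):=\bigwedge_{1\le i<j\le n}E(x_i,x_j)$ (empty conjunction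 = true). CFOC (clique-based first-order logic with counting) is the smallest set of formulas such that: (1) $\mathrm{clique}(\bar x)$ is in CFOC for any tuple of distinct variables; (2) if $\phi(\bar x)\in$ CFOC then $\mathrm{clique}(\bar x)\wedge\neg\phi(\bar x)\in$ CFOC; (3) if $\phi(\bar x),\psi(\bar y)\in$ CFOC then $\mathrm{clique}(\bar z)\wedge(\phi(\bar x)\star\psi(\bar y))\in$ CFOC for $\star\in\{\wedge,\vee\}$, where $\bar z$ lists each variable of $\bar x$ and $\bar y$ exactly once; (4) if $\phi(\bar x,y)\in$ CFOC then $\mathrm{clique}(\bar x)\wedge\exists^{\ge k}y\,\phi(\bar x,y)\in$ CFOC for every integer $k\ge1$, where $\exists^{\ge k}y\,\phi$ means there are at least $k$ vertices $v$ such that $\phi$ holds with $y=v$. Here $\phi(\bar x)$ means the free variables of $\phi$ are exactly those in $\bar x$. $\mathrm{CFOC}^3$ consists of the CFOC formulas using at most three distinct variables; a sentence is a formula with no free variables. *)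

theory Defs
  imports Main "HOL-Library.Multiset"
begin

definition simple_graph :: "'a set \<Rightarrow> ('a \<Rightarrow> 'a \<Rightarrow> bool) \<Rightarrow> bool" where
  "simple_graph V E \<longleftrightarrow> finite V
     \<and> (\<forall>u v. E u v \<longrightarrow> u \<in> V \<and> v \<in> V)
     \<and> (\<forall>u v. E u v \<longrightarrow> E v u)
     \<and> (\<forall>v. \<not> E v v)
     \<and> (\<forall>v\<in>V. \<exists>u. E v u)"

definition nbhd :: "('a \<Rightarrow> 'a \<Rightarrow> bool) \<Rightarrow> 'a \<Rightarrow> 'a set" where
  "nbhd E u = {x. E u x}"

datatype ebcol = EB0
  | EBS ebcol "ebcol multiset" "(ebcol \<times> ebcol) multiset" "ebcol multiset"

fun eb :: "nat \<Rightarrow> ('a \<Rightarrow> 'a \<Rightarrow> bool) \<Rightarrow> 'a \<Rightarrow> 'a \<Rightarrow> ebcol" where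
  "eb 0 E u v = EB0"
| "eb (Suc l) E u v =
     EBS (eb l E u v)
         (image_mset (\<lambda>x. eb l E u x) (mset_set (nbhd E u)))
         (image_mset (\<lambda>y. (eb l E u y, eb l E v y)) (mset_set (nbhd E u \<inter> nbhd E v)))
         (image_mset (\<lambda>z. eb l E v z) (mset_set (nbhd E v)))"

definition eb_colors :: "nat \<Rightarrow> ('a \<Rightarrow> 'a \<Rightarrow> bool) \<Rightarrow> ebcol multiset" where
  "eb_colors l E = image_mset (\<lambda>(u, v). eb l E u v) (mset_set {(u, v). E u v})"

definition eb_distinguishable ::
  "'a set \<Rightarrow> ('a \<Rightarrow> 'a \<Rightarrow> bool) \<Rightarrow> 'b set \<Rightarrow> ('b \<Rightarrow> 'b \<Rightarrow> bool) \<Rightarrow> bool" where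
  "eb_distinguishable V E W F \<longleftrightarrow> card V \<noteq> card W \<or> (\<exists>l. eb_colors l E \<noteq> eb_colors l F)"

text \<open>Each constructor
records the tuple of variables of the outer clique conjunct, which is also its
tuple of free variables:
  Clique xs          = clique(xs)
  CNeg xs p          = clique(xs) /\ ~p
  CConj zs p q       = clique(zs) /\ (p /\ q)
  CDisj zs p q       = clique(zs) /\ (p \/ q)
  CEx xs k y p       = clique(xs) /\ EX>=k y. p\<close>

type_synonym var = nat

datatype cfm = Clique "var list"
  | CNeg "var list" cfm
  | CConj "var list" cfm cfm
  | CDisj "var list" cfm cfm
  | CEx "var list" nat var cfm

text \<open>Free variables (as computed from the syntax of first-order logic; the
outer tuple lists exactly the free variables of well-formed formulas).\<close>
fun fv :: "cfm \<Rightarrow> var set" where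
  "fv (Clique xs) = set xs"
| "fv (CNeg xs p) = set xs \<union> fv p"
| "fv (CConj zs p q) = set zs \<union> fv p \<union> fv q"
| "fv (CDisj zs p q) = set zs \<union> fv p \<union> fv q"
| "fv (CEx xs k y p) = set xs \<union> (fv p - {y})"

fun vars :: "cfm \<Rightarrow> var set" where
  "vars (Clique xs) = set xs"
| "vars (CNeg xs p) = set xs \<union> vars p"
| "vars (CConj zs p q) = set zs \<union> vars p \<union> vars q"
| "vars (CDisj zs p q) = set zs \<union> vars p \<union> vars q"
| "vars (CEx xs k y p) = set xs \<union> {y} \<union> vars p"

inductive cfoc :: "cfm \<Rightarrow> bool" where
  clique: "distinct xs \<Longrightarrow> cfoc (Clique xs)"
| neg: "\<lbrakk>cfoc p; distinct xs; fv p = set xs\<rbrakk> \<Longrightarrow> cfoc (CNeg xs p)"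
| conj: "\<lbrakk>cfoc p; cfoc q; distinct zs; set zs = fv p \<union> fv q\<rbrakk> \<Longrightarrow> cfoc (CConj zs p q)"
| disj: "\<lbrakk>cfoc p; cfoc q; distinct zs; set zs = fv p \<union> fv q\<rbrakk> \<Longrightarrow> cfoc (CDisj zs p q)"
| ex: "\<lbrakk>cfoc p; distinct xs; y \<notin> set xs; fv p = insert y (set xs); k \<ge> 1\<rbrakk>
        \<Longrightarrow> cfoc (CEx xs k y p)"

definition clique_holds :: "('a \<Rightarrow> 'a \<Rightarrow> bool) \<Rightarrow> (var \<Rightarrow> 'a) \<Rightarrow> var list \<Rightarrow> bool" where
  "clique_holds E \<alpha> xs \<longleftrightarrow>
     (\<forall>i j. i < j \<and> j < length xs \<longrightarrow> E (\<alpha> (xs ! i)) (\<alpha> (xs ! j)))"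

fun sat :: "'a set \<Rightarrow> ('a \<Rightarrow> 'a \<Rightarrow> bool) \<Rightarrow> (var \<Rightarrow> 'a) \<Rightarrow> cfm \<Rightarrow> bool" where
  "sat V E \<alpha> (Clique xs) = clique_holds E \<alpha> xs"
| "sat V E \<alpha> (CNeg xs p) = (clique_holds E \<alpha> xs \<and> \<not> sat V E \<alpha> p)"
| "sat V E \<alpha> (CConj zs p q) = (clique_holds E \<alpha> zs \<and> (sat V E \<alpha> p \<and> sat V E \<alpha> q))"
| "sat V E \<alpha> (CDisj zs p q) = (clique_holds E \<alpha> zs \<and> (sat V E \<alpha> p \<or> sat V E \<alpha> q))"
| "sat V E \<alpha> (CEx xs k y p) =
     (clique_holds E \<alpha> xs \<and> k \<le> card {v \<in> V. sat V E (\<alpha>(y := v)) p})"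

text \<open>A sentence holds in a graph (its truth does not depend on the assignment).\<close>
definition models :: "'a set \<Rightarrow> ('a \<Rightarrow> 'a \<Rightarrow> bool) \<Rightarrow> cfm \<Rightarrow> bool" where
  "models V E p \<longleftrightarrow> (\<forall>\<alpha>. sat V E \<alpha> p)"

definition cfoc3_sentence :: "cfm \<Rightarrow> bool" where
  "cfoc3_sentence p \<longleftrightarrow> cfoc p \<and> card (vars p) \<le> 3 \<and> fv p = {}"

definition cfoc3_distinguishable ::
  "'a set \<Rightarrow> ('a \<Rightarrow> 'a \<Rightarrow> bool) \<Rightarrow> 'b set \<Rightarrow> ('b \<Rightarrow> 'b \<Rightarrow> bool) \<Rightarrow> bool" where
  "cfoc3_distinguishable V E W F \<longleftrightarrow>
     (\<exists>p. cfoc3_sentence p \<and> models V E p \<and> \<not> models W F p)"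

end

theory Submission
  imports Defs
begin


lemma count_image_mset_set:
  "finite S \<Longrightarrow> count (image_mset f (mset_set S)) a = card {x\<in>S. f x = a}"
proof (induction S rule: finite_induct)
  case empty then show ?case by simp
next
  case (insert x S)
  have "{y \<in> insert x S. f y = a} = (if f x = a then insert x {y \<in> S. f y = a} else {y \<in> S. f y = a})"
    by auto
  then show ?case using insert by auto
qed

lemma card_filter_mset:
  "finite A \<Longrightarrow> card {a\<in>A. P a} = size (filter_mset P (mset_set A))"
  by simp

lemma count_transfer:
  assumes fA: "finite A" and fB: "finite B"
    and eq: "image_mset f (mset_set A) = image_mset g (mset_set B)"
    and rel: "\<And>a b. a \<in> A \<Longrightarrow> b \<in> B \<Longrightarrow> f a = g b \<Longrightarrow> (P a \<longleftrightarrow> R b)"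
  shows "card {a\<in>A. P a} = card {b\<in>B. R b}"
proof -
  define Q where "Q c = (\<exists>b\<in>B. g b = c \<and> R b)" for c
  have imA: "f a \<in> g ` B" if "a \<in> A" for a
  proof -
    have "f a \<in># image_mset f (mset_set A)" using that fA by auto
    then have "f a \<in># image_mset g (mset_set B)" using eq by simp
    then show ?thesis using fB by auto
  qed
  have imB: "g b \<in> f ` A" if "b \<in> B" for b
  proof -
    have "g b \<in># image_mset g (mset_set B)" using that fB by auto
    then have "g b \<in># image_mset f (mset_set A)" using eq by simp
    then show ?thesis using fA by auto
  qed
  have PA: "P a \<longleftrightarrow> Q (f a)" if aA: "a \<in> A" for a
  proof
    assume "P a"
    obtain b where "b \<in> B" "g b = f a" using imA[OF aA] by auto
    then show "Q (f a)" using rel[OF aA] \<open>P a\<close> unfolding Q_def by auto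
  next
    assume "Q (f a)"
    then obtain b where "b \<in> B" "g b = f a" "R b" unfolding Q_def by auto
    then show "P a" using rel[OF aA] by auto
  qed
  have RB: "R b \<longleftrightarrow> Q (g b)" if bB: "b \<in> B" for b
  proof
    assume "R b" then show "Q (g b)" using bB unfolding Q_def by auto
  next
    assume "Q (g b)"
    then obtain b' where b': "b' \<in> B" "g b' = g b" "R b'" unfolding Q_def by auto
    obtain a where a: "a \<in> A" "f a = g b" using imB[OF bB] by auto
    have "P a" using rel[OF a(1) b'(1)] a b' by auto
    then show "R b" using rel[OF a(1) bB] a by auto
  qed
  have "card {a\<in>A. P a} = size (filter_mset P (mset_set A))" using fA by simp
  also have "filter_mset P (mset_set A) = filter_mset (\<lambda>a. Q (f a)) (mset_set A)"
    using PA fA by (intro filter_mset_cong) auto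
  also have "size \<dots> = size (filter_mset Q (image_mset f (mset_set A)))"
    by (metis image_mset_filter_mset_swap size_image_mset)
  also have "\<dots> = size (filter_mset Q (image_mset g (mset_set B)))" using eq by simp
  also have "\<dots> = size (filter_mset (\<lambda>b. Q (g b)) (mset_set B))"
    by (metis image_mset_filter_mset_swap size_image_mset)
  also have "filter_mset (\<lambda>b. Q (g b)) (mset_set B) = filter_mset R (mset_set B)"
    using RB fB by (intro filter_mset_cong) auto
  also have "size \<dots> = card {b\<in>B. R b}" using fB by simp
  finally show ?thesis .
qed



definition vc :: "nat \<Rightarrow> ('a \<Rightarrow> 'a \<Rightarrow> bool) \<Rightarrow> 'a \<Rightarrow> ebcol multiset" where
  "vc l E u = image_mset (eb l E u) (mset_set (nbhd E u))"

definition tri :: "nat \<Rightarrow> ('a \<Rightarrow> 'a \<Rightarrow> bool) \<Rightarrow> 'a \<Rightarrow> 'a \<Rightarrow> (ebcol \<times> ebcol) multiset" where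
  "tri l E u v = image_mset (\<lambda>y. (eb l E u y, eb l E v y)) (mset_set (nbhd E u \<inter> nbhd E v))"

lemma eb_Suc_eq: "eb (Suc l) E u v = EBS (eb l E u v) (vc l E u) (tri l E u v) (vc l E v)"
  by (simp add: vc_def tri_def)

fun revc :: "ebcol \<Rightarrow> ebcol" where
  "revc EB0 = EB0"
| "revc (EBS c A T B) = EBS (revc c) B (image_mset prod.swap T) A"

fun prevc :: "ebcol \<Rightarrow> ebcol" where
  "prevc EB0 = EB0" | "prevc (EBS c A T B) = c"
fun srcm :: "ebcol \<Rightarrow> ebcol multiset" where
  "srcm EB0 = {#}" | "srcm (EBS c A T B) = A"
fun dstm :: "ebcol \<Rightarrow> ebcol multiset" where
  "dstm EB0 = {#}" | "dstm (EBS c A T B) = B"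
fun trim :: "ebcol \<Rightarrow> (ebcol \<times> ebcol) multiset" where
  "trim EB0 = {#}" | "trim (EBS c A T B) = T"

lemma eb_rev: "eb l E v u = revc (eb l E u v)"
proof (induction l)
  case 0 then show ?case by simp
next
  case (Suc l)
  have "tri l E v u = image_mset prod.swap (tri l E u v)"
    by (simp add: tri_def multiset.map_comp o_def Int_commute)
  then show ?case using Suc by (simp only: eb_Suc_eq revc.simps)
qed

lemma prevc_eb: "prevc (eb (Suc l) E u v) = eb l E u v" by simp
lemma srcm_eb: "srcm (eb (Suc l) E u v) = vc l E u" by (simp only: eb_Suc_eq srcm.simps)
lemma dstm_eb: "dstm (eb (Suc l) E u v) = vc l E v" by (simp only: eb_Suc_eq dstm.simps)
lemma trim_eb: "trim (eb (Suc l) E u v) = tri l E u v" by (simp only: eb_Suc_eq trim.simps)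

lemma vc_mono: "image_mset prevc (vc (Suc l) E u) = vc l E u"
  by (simp add: vc_def multiset.map_comp o_def prevc_eb del: eb.simps)

lemma sg_finite: "simple_graph V E \<Longrightarrow> finite V" by (simp add: simple_graph_def)
lemma sg_edge: "simple_graph V E \<Longrightarrow> E u v \<Longrightarrow> u \<in> V \<and> v \<in> V" by (simp add: simple_graph_def)
lemma sg_sym: "simple_graph V E \<Longrightarrow> E u v \<Longrightarrow> E v u" by (simp add: simple_graph_def)
lemma sg_irr: "simple_graph V E \<Longrightarrow> \<not> E v v" by (simp add: simple_graph_def)
lemma sg_noniso: "simple_graph V E \<Longrightarrow> v \<in> V \<Longrightarrow> \<exists>u. E v u" by (simp add: simple_graph_def)
lemma sg_nbhd_sub: "simple_graph V E \<Longrightarrow> nbhd E u \<subseteq> V"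
  by (auto simp: nbhd_def simple_graph_def)
lemma sg_nbhd_fin: "simple_graph V E \<Longrightarrow> finite (nbhd E u)"
  using sg_nbhd_sub sg_finite finite_subset by metis
lemma size_vc: "size (vc l E u) = card (nbhd E u)" by (simp add: vc_def)

lemma mset_eq_by_counts:
  fixes M A :: "'c multiset"
  shows "((\<forall>a\<in>#A. count M a = count A a) \<and> size M = size A) \<longleftrightarrow> M = A"
proof
  assume h: "(\<forall>a\<in>#A. count M a = count A a) \<and> size M = size A"
  have sub: "A \<subseteq># M" unfolding subseteq_mset_def
  proof
    fix a show "count A a \<le> count M a"
      using h by (cases "a \<in># A") (auto simp: not_in_iff)
  qed
  show "M = A"
  proof (rule ccontr)
    assume "M \<noteq> A"
    then have "A \<subset># M" using sub by (simp add: subset_mset.le_less)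
    then have "size A < size M" by (rule mset_subset_size)
    then show False using h by simp
  qed
qed simp



lemma clique_holds_Nil[simp]: "clique_holds E \<alpha> []" by (simp add: clique_holds_def)
lemma clique_holds_1[simp]: "clique_holds E \<alpha> [a]" by (simp add: clique_holds_def)
lemma clique_holds_2[simp]: "clique_holds E \<alpha> [a,b] \<longleftrightarrow> E (\<alpha> a) (\<alpha> b)"
  unfolding clique_holds_def
proof
  assume H: "\<forall>i j. i < j \<and> j < length [a,b] \<longrightarrow> E (\<alpha> ([a,b] ! i)) (\<alpha> ([a,b] ! j))"
  show "E (\<alpha> a) (\<alpha> b)" using H[rule_format, of 0 1] by simp
qed (auto simp: less_Suc_eq)
lemma clique_holds_3[simp]: "clique_holds E \<alpha> [a,b,c] \<longleftrightarrow> E (\<alpha> a) (\<alpha> b) \<and> E (\<alpha> a) (\<alpha> c) \<and> E (\<alpha> b) (\<alpha> c)"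
  unfolding clique_holds_def
proof
  assume H: "\<forall>i j. i < j \<and> j < length [a,b,c] \<longrightarrow> E (\<alpha> ([a,b,c] ! i)) (\<alpha> ([a,b,c] ! j))"
  show "E (\<alpha> a) (\<alpha> b) \<and> E (\<alpha> a) (\<alpha> c) \<and> E (\<alpha> b) (\<alpha> c)"
    using H[rule_format, of 0 1] H[rule_format, of 0 2] H[rule_format, of 1 2] by simp
qed (auto simp: less_Suc_eq)

fun conj_list :: "var list \<Rightarrow> cfm list \<Rightarrow> cfm" where
  "conj_list zs [] = Clique zs"
| "conj_list zs (p # ps) = CConj zs p (conj_list zs ps)"

definition atleast :: "var list \<Rightarrow> nat \<Rightarrow> var \<Rightarrow> cfm \<Rightarrow> cfm" where
  "atleast zs n y p = (if n = 0 then Clique zs else CEx zs n y p)"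

definition exactly :: "var list \<Rightarrow> nat \<Rightarrow> var \<Rightarrow> cfm \<Rightarrow> cfm" where
  "exactly zs n y p = CConj zs (atleast zs n y p) (CNeg zs (CEx zs (Suc n) y p))"

definition alist :: "'c multiset \<Rightarrow> 'c list" where
  "alist A = (SOME xs. set xs = set_mset A)"

lemma set_alist[simp]: "set (alist A) = set_mset A"
  unfolding alist_def by (rule someI_ex) (simp add: finite_list)

definition msetf :: "(ebcol \<Rightarrow> cfm) \<Rightarrow> ebcol multiset \<Rightarrow> var \<Rightarrow> var \<Rightarrow> cfm" where
  "msetf f A i k = conj_list [i] (map (\<lambda>a. exactly [i] (count A a) k (f a)) (alist A)
      @ [exactly [i] (size A) k (Clique [i,k])])"

primrec phi :: "nat \<Rightarrow> ebcol \<Rightarrow> var \<Rightarrow> var \<Rightarrow> var \<Rightarrow> cfm" where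
  "phi 0 = (\<lambda>c i j k. if c = EB0 then Clique [i,j] else CNeg [i,j] (Clique [i,j]))"
| "phi (Suc l) = (\<lambda>c i j k. case c of EB0 \<Rightarrow> CNeg [i,j] (Clique [i,j])
    | EBS c0 A T B \<Rightarrow> conj_list [i,j] ([phi l c0 i j k, msetf (\<lambda>a. phi l a i k j) A i k,
         msetf (\<lambda>b. phi l b j k i) B j k]
       @ map (\<lambda>(a,b). exactly [i,j] (count T (a,b)) k (CConj [i,j,k] (phi l a i k j) (phi l b j k i))) (alist T)
       @ [exactly [i,j] (size T) k (Clique [i,j,k])]))"

lemma conj_list_wf:
  assumes "distinct zs" "\<forall>p\<in>set ps. cfoc p \<and> fv p \<subseteq> set zs"
  shows "cfoc (conj_list zs ps) \<and> fv (conj_list zs ps) = set zs"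
  using assms(2)
proof (induction ps)
  case Nil then show ?case using assms(1) by (auto intro: cfoc.intros)
next
  case (Cons p ps)
  then show ?case using assms(1) by (auto intro!: cfoc.intros)
qed

lemma vars_conj_list: "vars (conj_list zs ps) = set zs \<union> \<Union>(vars ` set ps)"
  by (induction ps) auto

lemma exactly_wf:
  assumes "cfoc p" "distinct zs" "y \<notin> set zs" "fv p = insert y (set zs)"
  shows "cfoc (exactly zs n y p) \<and> fv (exactly zs n y p) = set zs"
  using assms by (auto simp: exactly_def atleast_def intro!: cfoc.intros)

lemma vars_exactly: "vars (exactly zs n y p) = set zs \<union> {y} \<union> vars p"
  by (auto simp: exactly_def atleast_def)

lemma msetf_wf:
  assumes "\<And>a. cfoc (f a) \<and> fv (f a) = {i,k} \<and> vars (f a) \<subseteq> X" "i \<noteq> k"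
  shows "cfoc (msetf f A i k) \<and> fv (msetf f A i k) = {i} \<and> vars (msetf f A i k) \<subseteq> X \<union> {i,k}"
proof -
  have ex: "cfoc (exactly [i] n k (f a)) \<and> fv (exactly [i] n k (f a)) = {i}" for n a
    using exactly_wf[of "f a" "[i]" k n] assms by auto
  have ex2: "cfoc (exactly [i] n k (Clique [i,k])) \<and> fv (exactly [i] n k (Clique [i,k])) = {i}" for n
  proof -
    have c: "cfoc (Clique [i,k])" using assms by (auto intro: cfoc.intros)
    have f: "fv (Clique [i,k]) = insert k (set [i])" by auto
    show ?thesis using exactly_wf[OF c _ _ f, of n] assms by auto
  qed
  define ps where "ps = map (\<lambda>a. exactly [i] (count A a) k (f a)) (alist A)
      @ [exactly [i] (size A) k (Clique [i,k])]"
  have P: "\<forall>p\<in>set ps. cfoc p \<and> fv p \<subseteq> {i} \<and> vars p \<subseteq> X \<union> {i,k}"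
  proof
    fix p assume "p \<in> set ps"
    then consider a where "p = exactly [i] (count A a) k (f a)" | "p = exactly [i] (size A) k (Clique [i,k])"
      unfolding ps_def by auto
    then show "cfoc p \<and> fv p \<subseteq> {i} \<and> vars p \<subseteq> X \<union> {i,k}"
    proof cases
      case (1 a) then show ?thesis using ex[of "count A a" a] assms(1)[of a] by (auto simp: vars_exactly)
    next
      case 2 then show ?thesis using ex2[of "size A"] by (auto simp: vars_exactly)
    qed
  qed
  show ?thesis unfolding msetf_def ps_def[symmetric]
    using conj_list_wf[of "[i]" ps] P by (auto simp: vars_conj_list)
qed

lemma phi_wf:
  "distinct [i,j,k] \<Longrightarrow> cfoc (phi l c i j k) \<and> fv (phi l c i j k) = {i,j} \<and> vars (phi l c i j k) \<subseteq> {i,j,k}"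
proof (induction l arbitrary: c i j k)
  case 0 then show ?case by (auto intro!: cfoc.intros)
next
  case (Suc l)
  show ?case
  proof (cases c)
    case EB0 then show ?thesis using Suc.prems by (auto intro!: cfoc.intros)
  next
    case (EBS c0 A T B)
    have d: "distinct [i,k,j]" "distinct [j,k,i]" using Suc.prems by auto
    have m1: "cfoc (msetf (\<lambda>a. phi l a i k j) A i k) \<and> fv (msetf (\<lambda>a. phi l a i k j) A i k) = {i}
       \<and> vars (msetf (\<lambda>a. phi l a i k j) A i k) \<subseteq> {i,j,k}"
      using msetf_wf[of "\<lambda>a. phi l a i k j" i k "{i,j,k}" A] Suc.IH[OF d(1)] Suc.prems by auto
    have m2: "cfoc (msetf (\<lambda>a. phi l a j k i) B j k) \<and> fv (msetf (\<lambda>a. phi l a j k i) B j k) = {j}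
       \<and> vars (msetf (\<lambda>a. phi l a j k i) B j k) \<subseteq> {i,j,k}"
      using msetf_wf[of "\<lambda>a. phi l a j k i" j k "{i,j,k}" B] Suc.IH[OF d(2)] Suc.prems by auto
    have t: "cfoc (exactly [i,j] n k (CConj [i,j,k] (phi l a i k j) (phi l b j k i)))
      \<and> fv (exactly [i,j] n k (CConj [i,j,k] (phi l a i k j) (phi l b j k i))) = {i,j}
      \<and> vars (exactly [i,j] n k (CConj [i,j,k] (phi l a i k j) (phi l b j k i))) \<subseteq> {i,j,k}" for n a b
    proof -
      have c: "cfoc (CConj [i,j,k] (phi l a i k j) (phi l b j k i))"
        using Suc.IH[OF d(1), of a] Suc.IH[OF d(2), of b] Suc.prems by (auto intro!: cfoc.intros)
      have f: "fv (CConj [i,j,k] (phi l a i k j) (phi l b j k i)) = insert k (set [i,j])"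
        using Suc.IH[OF d(1), of a] Suc.IH[OF d(2), of b] Suc.prems by auto
      show ?thesis using exactly_wf[OF c _ _ f, of n] Suc.prems
          Suc.IH[OF d(1), of a] Suc.IH[OF d(2), of b]
        by (auto simp: vars_exactly)
    qed
    have t2: "cfoc (exactly [i,j] n k (Clique [i,j,k])) \<and> fv (exactly [i,j] n k (Clique [i,j,k])) = {i,j}
      \<and> vars (exactly [i,j] n k (Clique [i,j,k])) \<subseteq> {i,j,k}" for n
    proof -
      have c: "cfoc (Clique [i,j,k])" using Suc.prems by (auto intro: cfoc.intros)
      have f: "fv (Clique [i,j,k]) = insert k (set [i,j])" by auto
      show ?thesis using exactly_wf[OF c _ _ f, of n] Suc.prems by (auto simp: vars_exactly)
    qed
    define ps where "ps = [phi l c0 i j k, msetf (\<lambda>a. phi l a i k j) A i k,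
         msetf (\<lambda>b. phi l b j k i) B j k]
       @ map (\<lambda>(a,b). exactly [i,j] (count T (a,b)) k (CConj [i,j,k] (phi l a i k j) (phi l b j k i))) (alist T)
       @ [exactly [i,j] (size T) k (Clique [i,j,k])]"
    have P: "\<forall>p\<in>set ps. cfoc p \<and> fv p \<subseteq> {i,j} \<and> vars p \<subseteq> {i,j,k}"
    proof
      fix p assume "p \<in> set ps"
      then consider "p = phi l c0 i j k" | "p = msetf (\<lambda>a. phi l a i k j) A i k"
        | "p = msetf (\<lambda>b. phi l b j k i) B j k"
        | a b where "p = exactly [i,j] (count T (a,b)) k (CConj [i,j,k] (phi l a i k j) (phi l b j k i))"
        | "p = exactly [i,j] (size T) k (Clique [i,j,k])"
        unfolding ps_def by auto
      then show "cfoc p \<and> fv p \<subseteq> {i,j} \<and> vars p \<subseteq> {i,j,k}"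
      proof cases
        case 1 then show ?thesis using Suc.IH[OF Suc.prems, of c0] by auto
      next
        case 2 then show ?thesis using m1 by auto
      next
        case 3 then show ?thesis using m2 by auto
      next
        case (4 a b) then show ?thesis using t[of "count T (a,b)" a b] by auto
      next
        case 5 then show ?thesis using t2[of "size T"] by auto
      qed
    qed
    have "phi (Suc l) c i j k = conj_list [i,j] ps" using EBS ps_def by simp
    then show ?thesis using conj_list_wf[of "[i,j]" ps] P Suc.prems
      by (auto simp: vars_conj_list)
  qed
qed



lemma sat_conj_list: "sat V E \<alpha> (conj_list zs ps) \<longleftrightarrow> clique_holds E \<alpha> zs \<and> (\<forall>p\<in>set ps. sat V E \<alpha> p)"
  by (induction ps) auto

lemma sat_exactly: "sat V E \<alpha> (exactly zs n y p) \<longleftrightarrow> clique_holds E \<alpha> zs \<and> card {v\<in>V. sat V E (\<alpha>(y:=v)) p} = n"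
  by (auto simp: exactly_def atleast_def)

lemma sat_msetf:
  assumes sg: "simple_graph V E" and iV: "\<alpha> i \<in> V" and ik: "i \<noteq> k"
    and hf: "\<And>a v. sat V E (\<alpha>(k:=v)) (f a) \<longleftrightarrow> E (\<alpha> i) v \<and> eb l E (\<alpha> i) v = a"
  shows "sat V E \<alpha> (msetf f A i k) \<longleftrightarrow> vc l E (\<alpha> i) = A"
proof -
  define u where "u = \<alpha> i"
  have c1: "card {v\<in>V. sat V E (\<alpha>(k:=v)) (f a)} = count (vc l E u) a" for a
  proof -
    have "{v\<in>V. sat V E (\<alpha>(k:=v)) (f a)} = {x \<in> nbhd E u. eb l E u x = a}"
      using hf sg_edge[OF sg] by (auto simp: nbhd_def u_def)
    then show ?thesis by (simp add: vc_def count_image_mset_set[OF sg_nbhd_fin[OF sg]])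
  qed
  have c2: "card {v\<in>V. sat V E (\<alpha>(k:=v)) (Clique [i,k])} = size (vc l E u)"
  proof -
    have "{v\<in>V. sat V E (\<alpha>(k:=v)) (Clique [i,k])} = nbhd E u"
      using sg_edge[OF sg] ik by (auto simp: nbhd_def u_def)
    then show ?thesis by (simp add: size_vc)
  qed
  have "sat V E \<alpha> (msetf f A i k) \<longleftrightarrow> (\<forall>a\<in>#A. count (vc l E u) a = count A a) \<and> size (vc l E u) = size A"
    unfolding msetf_def sat_conj_list using c1 c2 by (auto simp: sat_exactly)
  also have "\<dots> \<longleftrightarrow> vc l E u = A" by (rule mset_eq_by_counts)
  finally show ?thesis by (simp add: u_def)
qed

lemma sat_phi:
  assumes sg: "simple_graph V E"
  shows "distinct [i,j,k] \<Longrightarrow> sat V E \<alpha> (phi l c i j k) \<longleftrightarrow> E (\<alpha> i) (\<alpha> j) \<and> eb l E (\<alpha> i) (\<alpha> j) = c"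
proof (induction l arbitrary: c i j k \<alpha>)
  case 0 then show ?case by auto
next
  case (Suc l)
  show ?case
  proof (cases c)
    case EB0 then show ?thesis by (simp add: eb_Suc_eq del: eb.simps)
  next
    case (EBS c0 A T B)
    define u where "u = \<alpha> i"
    define w where "w = \<alpha> j"
    have d: "distinct [i,k,j]" "distinct [j,k,i]" using Suc.prems by auto
    show ?thesis
    proof (cases "E u w")
      case False then show ?thesis using EBS by (simp add: sat_conj_list u_def w_def)
    next
      case True
      have uV: "u \<in> V" and wV: "w \<in> V" using sg_edge[OF sg True] by auto
      have s1: "sat V E \<alpha> (phi l c0 i j k) \<longleftrightarrow> eb l E u w = c0"
        using Suc.IH[OF Suc.prems] True by (simp add: u_def w_def)
      have s2: "sat V E \<alpha> (msetf (\<lambda>a. phi l a i k j) A i k) \<longleftrightarrow> vc l E u = A"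
        unfolding u_def
      proof (rule sat_msetf[OF sg])
        show "\<alpha> i \<in> V" using uV u_def by simp
        show "i \<noteq> k" using Suc.prems by auto
        fix a v show "sat V E (\<alpha>(k := v)) (phi l a i k j) = (E (\<alpha> i) v \<and> eb l E (\<alpha> i) v = a)"
          using Suc.IH[OF d(1), of "\<alpha>(k:=v)" a] Suc.prems by (simp add: fun_upd_def)
      qed
      have s3: "sat V E \<alpha> (msetf (\<lambda>b. phi l b j k i) B j k) \<longleftrightarrow> vc l E w = B"
        unfolding w_def
      proof (rule sat_msetf[OF sg])
        show "\<alpha> j \<in> V" using wV w_def by simp
        show "j \<noteq> k" using Suc.prems by auto
        fix a v show "sat V E (\<alpha>(k := v)) (phi l a j k i) = (E (\<alpha> j) v \<and> eb l E (\<alpha> j) v = a)"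
          using Suc.IH[OF d(2), of "\<alpha>(k:=v)" a] Suc.prems by (simp add: fun_upd_def)
      qed
      have fin: "finite (nbhd E u \<inter> nbhd E w)" using sg_nbhd_fin[OF sg] by auto
      have s4: "card {y\<in>V. sat V E (\<alpha>(k:=y)) (CConj [i,j,k] (phi l a i k j) (phi l b j k i))}
         = count (tri l E u w) (a,b)" for a b
      proof -
        have h1: "sat V E (\<alpha>(k:=y)) (phi l a i k j) \<longleftrightarrow> E u y \<and> eb l E u y = a" for y
          using Suc.IH[OF d(1), of "\<alpha>(k:=y)" a] Suc.prems by (simp add: fun_upd_def u_def)
        have h2: "sat V E (\<alpha>(k:=y)) (phi l b j k i) \<longleftrightarrow> E w y \<and> eb l E w y = b" for y
          using Suc.IH[OF d(2), of "\<alpha>(k:=y)" b] Suc.prems by (simp add: fun_upd_def w_def)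
        have "{y\<in>V. sat V E (\<alpha>(k:=y)) (CConj [i,j,k] (phi l a i k j) (phi l b j k i))}
           = {y \<in> nbhd E u \<inter> nbhd E w. (eb l E u y, eb l E w y) = (a,b)}"
          using h1 h2 Suc.prems
            True sg_edge[OF sg]
          by (auto simp: u_def w_def nbhd_def)
        then show ?thesis by (simp add: tri_def count_image_mset_set[OF fin])
      qed
      have s5: "card {y\<in>V. sat V E (\<alpha>(k:=y)) (Clique [i,j,k])} = size (tri l E u w)"
      proof -
        have "{y\<in>V. sat V E (\<alpha>(k:=y)) (Clique [i,j,k])} = nbhd E u \<inter> nbhd E w"
          using Suc.prems True sg_edge[OF sg] by (auto simp: u_def w_def nbhd_def)
        then show ?thesis by (simp add: tri_def)
      qed
      have s6: "(\<forall>p\<in>set (map (\<lambda>(a,b). exactly [i,j] (count T (a,b)) k (CConj [i,j,k] (phi l a i k j) (phi l b j k i))) (alist T)). sat V E \<alpha> p)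
          \<longleftrightarrow> (\<forall>ab\<in>#T. count (tri l E u w) ab = count T ab)"
        using s4 True by (auto simp: sat_exactly u_def w_def)
      have "sat V E \<alpha> (phi (Suc l) c i j k) \<longleftrightarrow> eb l E u w = c0 \<and> vc l E u = A \<and> vc l E w = B
          \<and> (\<forall>ab\<in>#T. count (tri l E u w) ab = count T ab) \<and> size (tri l E u w) = size T"
      proof -
        have e: "E (\<alpha> i) (\<alpha> j)" using True u_def w_def by simp
        have s5': "card {y\<in>V. E (\<alpha> i) (\<alpha> j) \<and> E (\<alpha> i) y \<and> E (\<alpha> j) y} = size (tri l E u w)"
          using s5 Suc.prems by (simp add: u_def w_def)
        show ?thesis
          using EBS e s1 s2 s3 s6 s5' Suc.prems by (simp add: sat_conj_list sat_exactly u_def w_def del: set_map) blast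
      qed
      also have "\<dots> \<longleftrightarrow> eb l E u w = c0 \<and> vc l E u = A \<and> vc l E w = B \<and> tri l E u w = T"
        using mset_eq_by_counts[of T "tri l E u w"] by blast
      also have "\<dots> \<longleftrightarrow> eb (Suc l) E u w = c" using EBS by (simp only: eb_Suc_eq ebcol.inject) blast
      finally show ?thesis using True by (simp add: u_def w_def)
    qed
  qed
qed



lemma sigma_mset:
  assumes "finite A" "\<forall>a\<in>A. finite (B a)"
  shows "image_mset g (mset_set (Sigma A B)) = (\<Sum>a\<in>A. image_mset (\<lambda>b. g (a,b)) (mset_set (B a)))"
  using assms
proof (induction A rule: finite_induct)
  case empty then show ?case by simp
next
  case (insert a A)
  have eq: "Sigma (insert a A) B = Pair a ` B a \<union> Sigma A B" by auto
  have disj: "Pair a ` B a \<inter> Sigma A B = {}" using insert(2) by auto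
  have fin1: "finite (Pair a ` B a)" using insert by auto
  have fin2: "finite (Sigma A B)" using insert by auto
  have "mset_set (Pair a ` B a) = image_mset (Pair a) (mset_set (B a))"
    by (rule image_mset_mset_set[symmetric]) (simp add: inj_on_def)
  then have "image_mset g (mset_set (Pair a ` B a)) = image_mset (\<lambda>b. g (a,b)) (mset_set (B a))"
    by (simp add: multiset.map_comp o_def)
  then show ?case
    using insert eq mset_set_Union[OF fin1 fin2 disj] by simp
qed

lemma edges_sigma: assumes sg: "simple_graph V E" shows "{(u,v). E u v} = Sigma V (nbhd E)"
  using sg_edge[OF sg] by (auto simp: nbhd_def)

lemma image_mset_sum_set: "image_mset f (\<Sum>a\<in>A. M a) = (\<Sum>a\<in>A. image_mset f (M a))"
  by (induction A rule: infinite_finite_induct) auto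

lemma eb_colors_sum:
  assumes sg: "simple_graph V E"
  shows "eb_colors l E = (\<Sum>u\<in>V. vc l E u)"
  unfolding eb_colors_def edges_sigma[OF sg]
  using sigma_mset[of V "nbhd E" "\<lambda>(u,v). eb l E u v"] sg_finite[OF sg] sg_nbhd_fin[OF sg]
  by (simp add: vc_def)

definition vcs :: "nat \<Rightarrow> 'a set \<Rightarrow> ('a \<Rightarrow> 'a \<Rightarrow> bool) \<Rightarrow> ebcol multiset multiset" where
  "vcs l V E = image_mset (vc l E) (mset_set V)"

lemma eb_colors_vcs: "simple_graph V E \<Longrightarrow> eb_colors l E = sum_mset (vcs l V E)"
  by (simp add: eb_colors_sum vcs_def sum_unfold_sum_mset)

lemma count_srcm:
  assumes sg: "simple_graph V E"
  shows "count (image_mset srcm (eb_colors (Suc m) E)) c = count (vcs m V E) c * size c"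
proof -
  have "image_mset srcm (eb_colors (Suc m) E) = (\<Sum>u\<in>V. image_mset srcm (vc (Suc m) E u))"
    by (simp add: eb_colors_sum[OF sg] image_mset_sum_set del: eb.simps)
  also have "\<dots> = (\<Sum>u\<in>V. replicate_mset (card (nbhd E u)) (vc m E u))"
  proof (rule sum.cong)
    fix u show "image_mset srcm (vc (Suc m) E u) = replicate_mset (card (nbhd E u)) (vc m E u)"
      unfolding vc_def[of "Suc m"] by (simp add: multiset.map_comp o_def srcm_eb image_mset_const_eq del: eb.simps)
  qed simp
  finally have "count (image_mset srcm (eb_colors (Suc m) E)) c
     = (\<Sum>u\<in>V. if c = vc m E u then card (nbhd E u) else 0)"
    by (simp add: count_sum)
  also have "\<dots> = (\<Sum>u\<in>{u\<in>V. vc m E u = c}. card (nbhd E u))"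
    using sg_finite[OF sg] by (simp add: sum.inter_filter eq_commute)
  also have "\<dots> = (\<Sum>u\<in>{u\<in>V. vc m E u = c}. size c)"
    by (rule sum.cong) (auto simp: size_vc[symmetric])
  also have "\<dots> = card {u\<in>V. vc m E u = c} * size c" by simp
  also have "card {u\<in>V. vc m E u = c} = count (vcs m V E) c"
    by (simp add: vcs_def count_image_mset_set[OF sg_finite[OF sg]])
  finally show ?thesis .
qed

lemma vc_nonempty: "simple_graph V E \<Longrightarrow> u \<in> V \<Longrightarrow> vc l E u \<noteq> {#}"
  using sg_noniso[of V E u] sg_nbhd_fin[of V E u]
  by (auto simp: vc_def nbhd_def mset_set_empty_iff)

lemma vcs_eq_from_colors:
  assumes sgE: "simple_graph V E" and sgF: "simple_graph W F"
    and h: "eb_colors (Suc m) E = eb_colors (Suc m) F"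
  shows "vcs m V E = vcs m W F"
proof (rule multiset_eqI)
  fix c
  show "count (vcs m V E) c = count (vcs m W F) c"
  proof (cases "c = {#}")
    case True
    have "count (vcs m V E) c = 0" using vc_nonempty[OF sgE] True sg_finite[OF sgE]
      by (auto simp: vcs_def count_image_mset_set)
    moreover have "count (vcs m W F) c = 0" using vc_nonempty[OF sgF] True sg_finite[OF sgF]
      by (auto simp: vcs_def count_image_mset_set)
    ultimately show ?thesis by simp
  next
    case False
    then have "size c > 0" by (simp add: nonempty_has_size)
    moreover have "count (vcs m V E) c * size c = count (vcs m W F) c * size c"
    proof -
      have "count (vcs m V E) c * size c = count (image_mset srcm (eb_colors (Suc m) E)) c"
        by (rule count_srcm[OF sgE, symmetric])
      also have "\<dots> = count (image_mset srcm (eb_colors (Suc m) F)) c" by (simp only: h)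
      also have "\<dots> = count (vcs m W F) c * size c" by (rule count_srcm[OF sgF])
      finally show ?thesis .
    qed
    ultimately show ?thesis using False by simp
  qed
qed



fun outer :: "cfm \<Rightarrow> var list" where
  "outer (Clique xs) = xs" | "outer (CNeg xs p) = xs" | "outer (CConj zs p q) = zs"
| "outer (CDisj zs p q) = zs" | "outer (CEx xs k y p) = xs"

fun hd2 :: "cfm \<Rightarrow> nat" where
  "hd2 (Clique xs) = 0" | "hd2 (CNeg xs p) = hd2 p" | "hd2 (CConj zs p q) = max (hd2 p) (hd2 q)"
| "hd2 (CDisj zs p q) = max (hd2 p) (hd2 q)" | "hd2 (CEx xs k y p) = Suc (Suc (hd2 p))"

definition agree :: "nat \<Rightarrow> 'a set \<Rightarrow> ('a \<Rightarrow> 'a \<Rightarrow> bool) \<Rightarrow> 'b set \<Rightarrow> ('b \<Rightarrow> 'b \<Rightarrow> bool)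
    \<Rightarrow> (var \<Rightarrow> 'a) \<Rightarrow> (var \<Rightarrow> 'b) \<Rightarrow> var set \<Rightarrow> bool" where
  "agree l V E W F \<alpha> \<beta> S \<longleftrightarrow>
     (\<forall>x\<in>S. \<alpha> x \<in> V \<and> \<beta> x \<in> W \<and> vc l E (\<alpha> x) = vc l F (\<beta> x))
   \<and> (\<forall>x\<in>S. \<forall>y\<in>S. x \<noteq> y \<longrightarrow> (E (\<alpha> x) (\<alpha> y) \<longleftrightarrow> F (\<beta> x) (\<beta> y))
        \<and> (E (\<alpha> x) (\<alpha> y) \<longrightarrow> eb l E (\<alpha> x) (\<alpha> y) = eb l F (\<beta> x) (\<beta> y)))"

lemma agree_mono: "agree l V E W F \<alpha> \<beta> S \<Longrightarrow> S' \<subseteq> S \<Longrightarrow> agree l V E W F \<alpha> \<beta> S'"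
  unfolding agree_def by blast

lemma fv_vars: "fv p \<subseteq> vars p"
  by (induction p) auto

lemma cfoc_outer: "cfoc p \<Longrightarrow> set (outer p) = fv p \<and> distinct (outer p)"
  by (induction rule: cfoc.induct) auto

lemma sat_outer: "sat V E \<alpha> p \<Longrightarrow> clique_holds E \<alpha> (outer p)"
  by (cases p) auto

lemma clique_edge:
  assumes "clique_holds E \<alpha> xs" "x \<in> set xs" "y \<in> set xs" "x \<noteq> y"
  shows "E (\<alpha> x) (\<alpha> y) \<or> E (\<alpha> y) (\<alpha> x)"
proof -
  obtain i where i: "i < length xs" "xs ! i = x" using assms(2) by (auto simp: in_set_conv_nth)
  obtain j where j: "j < length xs" "xs ! j = y" using assms(3) by (auto simp: in_set_conv_nth)
  have "i \<noteq> j" using i j assms(4) by auto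
  then have "i < j \<or> j < i" by auto
  then show ?thesis using assms(1) i j unfolding clique_holds_def by auto
qed

lemma sat_fv_edge:
  assumes sg: "simple_graph V E" and "cfoc p" "sat V E \<alpha> p" "x \<in> fv p" "y \<in> fv p" "x \<noteq> y"
  shows "E (\<alpha> x) (\<alpha> y)"
  using clique_edge[OF sat_outer[OF assms(3)], of x y] cfoc_outer[OF assms(2)] assms sg_sym[OF sg] by auto

lemma clique_agree:
  assumes "distinct xs" "\<forall>x\<in>set xs. \<forall>y\<in>set xs. x \<noteq> y \<longrightarrow> (E (\<alpha> x) (\<alpha> y) \<longleftrightarrow> F (\<beta> x) (\<beta> y))"
  shows "clique_holds E \<alpha> xs \<longleftrightarrow> clique_holds F \<beta> xs"
proof -
  have "E (\<alpha> (xs!i)) (\<alpha> (xs!j)) \<longleftrightarrow> F (\<beta> (xs!i)) (\<beta> (xs!j))" if "i < j" "j < length xs" for i j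
  proof -
    have "xs!i \<noteq> xs!j" using assms(1) that by (simp add: nth_eq_iff_index_eq)
    then show ?thesis using assms(2) that by auto
  qed
  then show ?thesis unfolding clique_holds_def by auto
qed

lemma agree_clique: "agree l V E W F \<alpha> \<beta> (set xs) \<Longrightarrow> distinct xs \<Longrightarrow> clique_holds E \<alpha> xs \<longleftrightarrow> clique_holds F \<beta> xs"
  by (rule clique_agree) (auto simp: agree_def)



lemma len2_cases:
  assumes "length xs \<le> 2"
  obtains "xs = []" | x where "xs = [x]" | x z where "xs = [x,z]"
  using assms by (cases xs; cases "tl xs"; auto)

lemma ex_step:
  assumes sgE: "simple_graph V E" and sgF: "simple_graph W F"
    and H: "\<And>m. vcs m V E = vcs m W F"
    and cp: "cfoc p" and dxs: "distinct xs" and yn: "y \<notin> set xs" and fvp: "fv p = insert y (set xs)"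
    and len: "length xs \<le> 2"
    and IH: "\<And>\<alpha> \<beta>. agree m V E W F \<alpha> \<beta> (fv p) \<Longrightarrow> sat V E \<alpha> p \<longleftrightarrow> sat W F \<beta> p"
    and ag: "agree (Suc (Suc m)) V E W F \<alpha> \<beta> (set xs)"
    and cl: "clique_holds E \<alpha> xs"
  shows "card {v\<in>V. sat V E (\<alpha>(y:=v)) p} = card {w\<in>W. sat W F (\<beta>(y:=w)) p}"
  using len
proof (cases rule: len2_cases)
  case 1
  show ?thesis
  proof (rule count_transfer[where f = "vc m E" and g = "vc m F"])
    show "finite V" "finite W" using sgE sgF by (auto simp: sg_finite)
    show "image_mset (vc m E) (mset_set V) = image_mset (vc m F) (mset_set W)"
      using H[of m] by (simp add: vcs_def)
    fix v w assume "v \<in> V" "w \<in> W" "vc m E v = vc m F w"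
    then have "agree m V E W F (\<alpha>(y:=v)) (\<beta>(y:=w)) (fv p)"
      using fvp 1 by (auto simp: agree_def)
    then show "sat V E (\<alpha>(y:=v)) p \<longleftrightarrow> sat W F (\<beta>(y:=w)) p" by (rule IH)
  qed
next
  case (2 x)
  define u where "u = \<alpha> x"
  define u' where "u' = \<beta> x"
  have xy: "x \<noteq> y" using yn 2 by auto
  have ag1: "u \<in> V" "u' \<in> W" "vc (Suc (Suc m)) E u = vc (Suc (Suc m)) F u'"
    using ag 2 by (auto simp: agree_def u_def u'_def)
  have set1: "{v\<in>V. sat V E (\<alpha>(y:=v)) p} = {v\<in>nbhd E u. sat V E (\<alpha>(y:=v)) p}"
  proof -
    have "E u v" if "sat V E (\<alpha>(y:=v)) p" for v
      using sat_fv_edge[OF sgE cp that, of x y] fvp 2 xy by (simp add: u_def)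
    then show ?thesis using sg_nbhd_sub[OF sgE] by (auto simp: nbhd_def)
  qed
  have set2: "{w\<in>W. sat W F (\<beta>(y:=w)) p} = {w\<in>nbhd F u'. sat W F (\<beta>(y:=w)) p}"
  proof -
    have "F u' w" if "sat W F (\<beta>(y:=w)) p" for w
      using sat_fv_edge[OF sgF cp that, of x y] fvp 2 xy by (simp add: u'_def)
    then show ?thesis using sg_nbhd_sub[OF sgF] by (auto simp: nbhd_def)
  qed
  show ?thesis unfolding set1 set2
  proof (rule count_transfer[where f = "eb (Suc m) E u" and g = "eb (Suc m) F u'"])
    show "finite (nbhd E u)" "finite (nbhd F u')" using sgE sgF by (auto simp: sg_nbhd_fin)
    have "vc (Suc m) E u = vc (Suc m) F u'"
      using ag1(3) vc_mono[of "Suc m" E u] vc_mono[of "Suc m" F u'] by metis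
    then show "image_mset (eb (Suc m) E u) (mset_set (nbhd E u)) = image_mset (eb (Suc m) F u') (mset_set (nbhd F u'))"
      by (simp add: vc_def del: eb.simps)
    fix v w assume v: "v \<in> nbhd E u" and w: "w \<in> nbhd F u'" and e: "eb (Suc m) E u v = eb (Suc m) F u' w"
    have Euv: "E u v" "E v u" "v \<in> V" using v sg_sym[OF sgE] sg_edge[OF sgE] by (auto simp: nbhd_def)
    have Fuw: "F u' w" "F w u'" "w \<in> W" using w sg_sym[OF sgF] sg_edge[OF sgF] by (auto simp: nbhd_def)
    have f1: "eb m E u v = eb m F u' w" using e by (metis prevc_eb)
    have f2: "eb m E v u = eb m F w u'" using f1 by (metis eb_rev)
    have f3: "vc m E u = vc m F u'" using e by (metis srcm_eb)
    have f4: "vc m E v = vc m F w" using e by (metis dstm_eb)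
    have "agree m V E W F (\<alpha>(y:=v)) (\<beta>(y:=w)) (fv p)"
      using fvp 2 xy Euv Fuw f1 f2 f3 f4 ag1 by (auto simp: agree_def u_def u'_def)
    then show "sat V E (\<alpha>(y:=v)) p \<longleftrightarrow> sat W F (\<beta>(y:=w)) p" by (rule IH)
  qed
next
  case (3 x z)
  define u1 where "u1 = \<alpha> x"
  define u1' where "u1' = \<beta> x"
  define u2 where "u2 = \<alpha> z"
  define u2' where "u2' = \<beta> z"
  have xy: "x \<noteq> y" "z \<noteq> y" "x \<noteq> z" using yn dxs 3 by auto
  have E12: "E u1 u2" using cl 3 by (simp add: u1_def u2_def)
  have ag1: "u1 \<in> V" "u1' \<in> W" "u2 \<in> V" "u2' \<in> W" "F u1' u2'"
     "eb (Suc (Suc m)) E u1 u2 = eb (Suc (Suc m)) F u1' u2'"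
    using ag 3 E12 xy by (auto simp: agree_def u1_def u1'_def u2_def u2'_def)
  have set1: "{v\<in>V. sat V E (\<alpha>(y:=v)) p} = {v\<in>nbhd E u1 \<inter> nbhd E u2. sat V E (\<alpha>(y:=v)) p}"
  proof -
    have "E u1 v \<and> E u2 v" if "sat V E (\<alpha>(y:=v)) p" for v
      using sat_fv_edge[OF sgE cp that, of x y] sat_fv_edge[OF sgE cp that, of z y] fvp 3 xy
      by (simp add: u1_def u2_def)
    then show ?thesis using sg_nbhd_sub[OF sgE] by (auto simp: nbhd_def)
  qed
  have set2: "{w\<in>W. sat W F (\<beta>(y:=w)) p} = {w\<in>nbhd F u1' \<inter> nbhd F u2'. sat W F (\<beta>(y:=w)) p}"
  proof -
    have "F u1' w \<and> F u2' w" if "sat W F (\<beta>(y:=w)) p" for w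
      using sat_fv_edge[OF sgF cp that, of x y] sat_fv_edge[OF sgF cp that, of z y] fvp 3 xy
      by (simp add: u1'_def u2'_def)
    then show ?thesis using sg_nbhd_sub[OF sgF] by (auto simp: nbhd_def)
  qed
  show ?thesis unfolding set1 set2
  proof (rule count_transfer[where f = "\<lambda>v. (eb (Suc m) E u1 v, eb (Suc m) E u2 v)"
        and g = "\<lambda>w. (eb (Suc m) F u1' w, eb (Suc m) F u2' w)"])
    show "finite (nbhd E u1 \<inter> nbhd E u2)" "finite (nbhd F u1' \<inter> nbhd F u2')"
      using sgE sgF by (auto simp: sg_nbhd_fin)
    have "tri (Suc m) E u1 u2 = tri (Suc m) F u1' u2'"
      using ag1(6) by (metis trim_eb)
    then show "image_mset (\<lambda>v. (eb (Suc m) E u1 v, eb (Suc m) E u2 v)) (mset_set (nbhd E u1 \<inter> nbhd E u2))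
      = image_mset (\<lambda>w. (eb (Suc m) F u1' w, eb (Suc m) F u2' w)) (mset_set (nbhd F u1' \<inter> nbhd F u2'))"
      by (simp add: tri_def del: eb.simps)
    fix v w assume v: "v \<in> nbhd E u1 \<inter> nbhd E u2" and w: "w \<in> nbhd F u1' \<inter> nbhd F u2'"
      and e: "(eb (Suc m) E u1 v, eb (Suc m) E u2 v) = (eb (Suc m) F u1' w, eb (Suc m) F u2' w)"
    have e1: "eb (Suc m) E u1 v = eb (Suc m) F u1' w" and e2: "eb (Suc m) E u2 v = eb (Suc m) F u2' w"
      using e by auto
    have Ev: "E u1 v" "E v u1" "E u2 v" "E v u2" "E u2 u1" "v \<in> V"
      using v sg_sym[OF sgE] sg_edge[OF sgE] E12 by (auto simp: nbhd_def)
    have Fw: "F u1' w" "F w u1'" "F u2' w" "F w u2'" "F u2' u1'" "w \<in> W"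
      using w sg_sym[OF sgF] sg_edge[OF sgF] ag1(5) by (auto simp: nbhd_def)
    have g1: "eb m E u1 v = eb m F u1' w" using e1 by (metis prevc_eb)
    have g2: "eb m E v u1 = eb m F w u1'" using g1 by (metis eb_rev)
    have g3: "eb m E u2 v = eb m F u2' w" using e2 by (metis prevc_eb)
    have g4: "eb m E v u2 = eb m F w u2'" using g3 by (metis eb_rev)
    have g5: "vc m E u1 = vc m F u1'" using e1 by (metis srcm_eb)
    have g6: "vc m E u2 = vc m F u2'" using e2 by (metis srcm_eb)
    have g7: "vc m E v = vc m F w" using e1 by (metis dstm_eb)
    have g8: "eb m E u1 u2 = eb m F u1' u2'" using ag1(6) by (metis prevc_eb)
    have g9: "eb m E u2 u1 = eb m F u2' u1'" using g8 by (metis eb_rev)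
    have "agree m V E W F (\<alpha>(y:=v)) (\<beta>(y:=w)) (fv p)"
      using fvp 3 xy Ev Fw g1 g2 g3 g4 g5 g6 g7 g8 g9 ag1 E12
      by (auto simp: agree_def u1_def u1'_def u2_def u2'_def)
    then show "sat V E (\<alpha>(y:=v)) p \<longleftrightarrow> sat W F (\<beta>(y:=w)) p" by (rule IH)
  qed
qed



lemma main_B:
  assumes sgE: "simple_graph V E" and sgF: "simple_graph W F"
    and H: "\<And>m. vcs m V E = vcs m W F"
  shows "cfoc p \<Longrightarrow> finite X \<Longrightarrow> card X \<le> 3 \<Longrightarrow> vars p \<subseteq> X \<Longrightarrow> hd2 p \<le> l
    \<Longrightarrow> agree l V E W F \<alpha> \<beta> (fv p) \<Longrightarrow> sat V E \<alpha> p \<longleftrightarrow> sat W F \<beta> p"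
proof (induction p arbitrary: l \<alpha> \<beta> rule: cfoc.induct)
  case (clique xs) then show ?case by (simp add: agree_clique)
next
  case (neg p xs)
  have "sat V E \<alpha> p \<longleftrightarrow> sat W F \<beta> p" using neg by auto
  moreover have "clique_holds E \<alpha> xs \<longleftrightarrow> clique_holds F \<beta> xs" using neg by (auto simp: agree_clique)
  ultimately show ?case by simp
next
  case (conj p q zs)
  have ap: "agree l V E W F \<alpha> \<beta> (fv p)" "agree l V E W F \<alpha> \<beta> (fv q)"
    using agree_mono[OF conj.prems(5)] by auto
  have "sat V E \<alpha> p \<longleftrightarrow> sat W F \<beta> p" using conj.IH(1)[OF conj.prems(1,2) _ _ ap(1)] conj.prems by auto
  moreover have "sat V E \<alpha> q \<longleftrightarrow> sat W F \<beta> q" using conj.IH(2)[OF conj.prems(1,2) _ _ ap(2)] conj.prems by auto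
  moreover have "clique_holds E \<alpha> zs \<longleftrightarrow> clique_holds F \<beta> zs"
  proof (rule agree_clique)
    show "agree l V E W F \<alpha> \<beta> (set zs)" using conj.prems(5) conj.hyps(4) by (simp add: Un_absorb sup_assoc sup_left_commute)
  qed (use conj.hyps in auto)
  ultimately show ?case by simp
next
  case (disj p q zs)
  have ap: "agree l V E W F \<alpha> \<beta> (fv p)" "agree l V E W F \<alpha> \<beta> (fv q)"
    using agree_mono[OF disj.prems(5)] by auto
  have "sat V E \<alpha> p \<longleftrightarrow> sat W F \<beta> p" using disj.IH(1)[OF disj.prems(1,2) _ _ ap(1)] disj.prems by auto
  moreover have "sat V E \<alpha> q \<longleftrightarrow> sat W F \<beta> q" using disj.IH(2)[OF disj.prems(1,2) _ _ ap(2)] disj.prems by auto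
  moreover have "clique_holds E \<alpha> zs \<longleftrightarrow> clique_holds F \<beta> zs"
  proof (rule agree_clique)
    show "agree l V E W F \<alpha> \<beta> (set zs)" using disj.prems(5) disj.hyps(4) by (simp add: Un_absorb sup_assoc sup_left_commute)
  qed (use disj.hyps in auto)
  ultimately show ?case by simp
next
  case (ex p xs y k)
  obtain m where l: "l = Suc (Suc m)" and hm: "hd2 p \<le> m"
    using ex.prems(4) by (cases l; cases "l - 1") auto
  have fvx: "fv (CEx xs k y p) = set xs" using ex.hyps by auto
  have "insert y (set xs) \<subseteq> X" using ex.prems(3) ex.hyps fv_vars[of p] by auto
  then have "card (insert y (set xs)) \<le> 3" using ex.prems(1,2) card_mono order_trans by blast
  then have len: "length xs \<le> 2" using ex.hyps by (simp add: distinct_card)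
  have IH: "sat V E \<alpha>' p \<longleftrightarrow> sat W F \<beta>' p" if "agree m V E W F \<alpha>' \<beta>' (fv p)" for \<alpha>' \<beta>'
    using ex.IH[OF ex.prems(1,2) _ hm that] ex.prems(3) by auto
  have ag: "agree (Suc (Suc m)) V E W F \<alpha> \<beta> (set xs)" using ex.prems(5) fvx l by simp
  have cleq: "clique_holds E \<alpha> xs \<longleftrightarrow> clique_holds F \<beta> xs" using ag ex.hyps by (simp add: agree_clique)
  show ?case
  proof (cases "clique_holds E \<alpha> xs")
    case True
    have "card {v\<in>V. sat V E (\<alpha>(y:=v)) p} = card {w\<in>W. sat W F (\<beta>(y:=w)) p}"
      by (rule ex_step[OF sgE sgF H ex.hyps(1,2,3,4) len IH ag True])
    then show ?thesis using cleq by simp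
  next
    case False then show ?thesis using cleq by simp
  qed
qed

lemma sentence_B:
  assumes sgE: "simple_graph V E" and sgF: "simple_graph W F"
    and H: "\<And>m. vcs m V E = vcs m W F" and p: "cfoc3_sentence p"
  shows "sat V E \<alpha> p \<longleftrightarrow> sat W F \<beta> p"
proof (rule main_B[OF sgE sgF H, of p "vars p" "hd2 p"])
  show "cfoc p" "card (vars p) \<le> 3" using p by (auto simp: cfoc3_sentence_def)
  show "finite (vars p)" by (induction p) auto
  show "agree (hd2 p) V E W F \<alpha> \<beta> (fv p)" using p by (simp add: cfoc3_sentence_def agree_def)
qed auto



lemma dist_from_counts:
  fixes V :: "'a set" and W :: "'b set" and a b :: nat and Q :: "nat \<Rightarrow> cfm"
  assumes Qs: "\<And>n. n \<ge> 1 \<Longrightarrow> cfoc3_sentence (Q n)"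
    and QV: "\<And>\<alpha> n. sat V E \<alpha> (Q n) \<longleftrightarrow> n \<le> a"
    and QW: "\<And>\<alpha> n. sat W F \<alpha> (Q n) \<longleftrightarrow> n \<le> b"
    and ne: "a \<noteq> b"
  shows "cfoc3_distinguishable V E W F"
proof (cases "a > b")
  case True
  have "cfoc3_sentence (Q a)" using Qs True by auto
  moreover have "models V E (Q a)" using QV by (simp add: models_def)
  moreover have "\<not> models W F (Q a)" using QW True by (simp add: models_def)
  ultimately show ?thesis unfolding cfoc3_distinguishable_def by blast
next
  case False
  then have ab: "a < b" using ne by auto
  have s: "cfoc3_sentence (Q b)" using Qs ab by auto
  have "cfoc3_sentence (CNeg [] (Q b))"
    using s by (auto simp: cfoc3_sentence_def intro!: cfoc.intros)
  moreover have "models V E (CNeg [] (Q b))" using QV ab by (simp add: models_def)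
  moreover have "\<not> models W F (CNeg [] (Q b))" using QW by (simp add: models_def)
  ultimately show ?thesis unfolding cfoc3_distinguishable_def by blast
qed

definition QV where "QV n = CEx [] n 0 (Clique [0])"

lemma QV_sentence: "n \<ge> 1 \<Longrightarrow> cfoc3_sentence (QV n)"
  by (auto simp: QV_def cfoc3_sentence_def intro!: cfoc.intros)

lemma QV_sat: "sat V E \<alpha> (QV n) \<longleftrightarrow> n \<le> card V"
  by (simp add: QV_def)

definition QM where "QM l M n = CEx [] n 0 (msetf (\<lambda>a. phi l a 0 1 2) M 0 1)"

lemma QM_sentence: "n \<ge> 1 \<Longrightarrow> cfoc3_sentence (QM l M n)"
proof -
  assume n: "n \<ge> 1"
  have m: "cfoc (msetf (\<lambda>a. phi l a 0 1 2) M 0 1) \<and> fv (msetf (\<lambda>a. phi l a 0 1 2) M 0 1) = {0}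
     \<and> vars (msetf (\<lambda>a. phi l a 0 1 2) M 0 1) \<subseteq> {0,1,2} \<union> {0,1}"
    by (rule msetf_wf) (use phi_wf[of 0 1 2 l] in auto)
  have "vars (QM l M n) \<subseteq> {0,1,2}" using m by (auto simp: QM_def)
  then have "card (vars (QM l M n)) \<le> card {0::nat,1,2}" by (rule card_mono[rotated]) simp
  then show ?thesis using m n by (auto simp: QM_def cfoc3_sentence_def intro!: cfoc.intros)
qed

lemma QM_sat:
  assumes sg: "simple_graph V E"
  shows "sat V E \<alpha> (QM l M n) \<longleftrightarrow> n \<le> count (vcs l V E) M"
proof -
  have "{v\<in>V. sat V E (\<alpha>(0:=v)) (msetf (\<lambda>a. phi l a 0 1 2) M 0 1)} = {v\<in>V. vc l E v = M}"
  proof (intro Collect_cong conj_cong refl)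
    fix v assume v: "v \<in> V"
    have "sat V E (\<alpha>(0:=v)) (msetf (\<lambda>a. phi l a 0 1 2) M 0 1) \<longleftrightarrow> vc l E ((\<alpha>(0:=v)) 0) = M"
    proof (rule sat_msetf[OF sg])
      show "(\<alpha>(0:=v)) 0 \<in> V" using v by simp
      fix a w show "sat V E ((\<alpha>(0:=v))(1:=w)) (phi l a 0 1 2) \<longleftrightarrow>
          E ((\<alpha>(0:=v)) 0) w \<and> eb l E ((\<alpha>(0:=v)) 0) w = a"
        using sat_phi[OF sg, of 0 1 2 "(\<alpha>(0:=v))(1:=w)" l a] by simp
    qed simp
    then show "sat V E (\<alpha>(0:=v)) (msetf (\<lambda>a. phi l a 0 1 2) M 0 1) \<longleftrightarrow> vc l E v = M" by simp
  qed
  note eq = this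
  have "sat V E \<alpha> (QM l M n) \<longleftrightarrow> n \<le> card {v\<in>V. sat V E (\<alpha>(0:=v)) (msetf (\<lambda>a. phi l a 0 1 2) M 0 1)}"
    unfolding QM_def by (simp only: sat.simps clique_holds_Nil simp_thms)
  also have "\<dots> \<longleftrightarrow> n \<le> card {v\<in>V. vc l E v = M}" unfolding eq ..
  also have "card {v\<in>V. vc l E v = M} = count (vcs l V E) M"
    unfolding vcs_def by (rule count_image_mset_set[OF sg_finite[OF sg], symmetric])
  finally show ?thesis .
qed



theorem mainTheorem5:
  fixes V :: "'a set" and E :: "'a \<Rightarrow> 'a \<Rightarrow> bool"
    and W :: "'b set" and F :: "'b \<Rightarrow> 'b \<Rightarrow> bool"
  assumes "simple_graph V E" and "simple_graph W F"
  shows "eb_distinguishable V E W F \<longleftrightarrow> cfoc3_distinguishable V E W F"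
proof
  assume "eb_distinguishable V E W F"
  then consider "card V \<noteq> card W" | l where "eb_colors l E \<noteq> eb_colors l F"
    unfolding eb_distinguishable_def by blast
  then show "cfoc3_distinguishable V E W F"
  proof cases
    case 1
    show ?thesis by (rule dist_from_counts[of QV, OF QV_sentence QV_sat QV_sat 1])
  next
    case (2 l)
    have "vcs l V E \<noteq> vcs l W F"
    proof
      assume "vcs l V E = vcs l W F"
      then have "eb_colors l E = eb_colors l F"
        by (simp add: eb_colors_vcs[OF assms(1)] eb_colors_vcs[OF assms(2)])
      then show False using 2 by simp
    qed
    then have "\<exists>M. count (vcs l V E) M \<noteq> count (vcs l W F) M"
      by (meson multiset_eqI)
    then obtain M where M: "count (vcs l V E) M \<noteq> count (vcs l W F) M" by blast
    show ?thesis
      by (rule dist_from_counts[of "QM l M", OF QM_sentence QM_sat[OF assms(1)] QM_sat[OF assms(2)] M])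
  qed
next
  assume d: "cfoc3_distinguishable V E W F"
  show "eb_distinguishable V E W F"
  proof (rule ccontr)
    assume "\<not> eb_distinguishable V E W F"
    then have "\<forall>l. eb_colors l E = eb_colors l F" unfolding eb_distinguishable_def by blast
    then have H: "\<And>m. vcs m V E = vcs m W F"
      using vcs_eq_from_colors[OF assms] by blast
    obtain p where p: "cfoc3_sentence p" "models V E p" "\<not> models W F p"
      using d unfolding cfoc3_distinguishable_def by blast
    obtain \<beta> where "\<not> sat W F \<beta> p" using p(3) unfolding models_def by blast
    moreover have "sat V E (\<lambda>_. undefined) p" using p(2) unfolding models_def by blast
    ultimately show False using sentence_B[OF assms H p(1)] by blast
  qed
qed

end
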